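(* Let $\mu$ be a positive finite Borel measure on $[0,1)$, let $\gamma>0$ and $\delta\in(-\gamma,1-\gamma)$. The following are equivalent: (i) $I_\mu$ is a well defined continuous operator from $H^\infty_{v_\gamma}$ into $H^\infty_{v_{\gamma+\delta}}$; (ii) $I_\mu$ is a well defined continuous operator from $H^0_{v_\gamma}$ into $H^0_{v_{\gamma+\delta}}$, and $1/v_\gamma\in L_1([0,1),\mu)$; (iii) $\mu$ is a $(1-\delta)$-Carleson measure; (iv) $\mu_n=O\left(\frac{1}{n^{1-\delta}}\right)$ as $n\to\infty$.
   Context: $\mathbb{D}$ is the open unit disc and $H(\mathbb{D})$ the space of holomorphic functions on $\mathbb{D}$. For a positive finite Borel measure $\mu$ on $[0,1)$, $\mu_n=\int_0^1 t^n\,d\mu(t)$ ($n\ge 0$) are its moments, and $I_\mu(f)(z)=\int_0^1\frac{f(t)}{1-tz}\,d\mu(t)$ for $f\in H(\mathbb{D})$ whenever this defines a holomorphic function on $\mathbb{D}$. For $\gamma>0$, $v_\gamma(z)=(1-|z|)^\gamma$; $H^\infty_{v}=\{f\in H(\mathbb{D}):\|f\|_v:=\sup_{z\in\mathbb{D}}v(z)|f(z)|<\infty\}$ and $H^0_v=\{f\in H^\infty_v:\lim_{|z|\to1^-}v(z)|f(z)|=0\}$, both Banach spaces with norm $\|\cdot\|_v$. For $s>0$, $\mu$ is an $s$-Carleson measure if $\mu([t,1))=O((1-t)^s)$ as $t\to1^-$. *)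

theory Defs
  imports "HOL-Analysis.Analysis" "HOL-Library.Landau_Symbols"
begin

definition vw :: "real \<Rightarrow> complex \<Rightarrow> real" where
  "vw g z = (1 - norm z) powr g"

definition Hinf :: "real \<Rightarrow> (complex \<Rightarrow> complex) \<Rightarrow> bool" where
  "Hinf g f \<longleftrightarrow> f holomorphic_on ball 0 1 \<and>
     bounded ((\<lambda>z. vw g z * norm (f z)) ` ball 0 1)"

definition H0 :: "real \<Rightarrow> (complex \<Rightarrow> complex) \<Rightarrow> bool" where
  "H0 g f \<longleftrightarrow> Hinf g f \<and>
     (\<forall>e>0. \<exists>r<1. \<forall>z\<in>ball 0 1. r < norm z \<longrightarrow> vw g z * norm (f z) < e)"

definition wnorm :: "real \<Rightarrow> (complex \<Rightarrow> complex) \<Rightarrow> real" where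
  "wnorm g f = (SUP z\<in>ball 0 1. vw g z * norm (f z))"

definition Imu :: "real measure \<Rightarrow> (complex \<Rightarrow> complex) \<Rightarrow> complex \<Rightarrow> complex" where
  "Imu \<mu> f z = (\<integral>t. f (complex_of_real t) / (1 - complex_of_real t * z) \<partial>\<mu>)"

definition Imu_defined :: "real measure \<Rightarrow> (complex \<Rightarrow> complex) \<Rightarrow> bool" where
  "Imu_defined \<mu> f \<longleftrightarrow>
     (\<forall>z\<in>ball 0 1. integrable \<mu> (\<lambda>t. f (complex_of_real t) / (1 - complex_of_real t * z)))
     \<and> Imu \<mu> f holomorphic_on ball 0 1"

text \<open>I_mu is a well defined continuous (= bounded, by linearity) operator from the
  space X (in weight g1) into the space Y (in weight g2), both with the weighted sup norm.\<close>
definition Imu_bounded ::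
  "real measure \<Rightarrow> (real \<Rightarrow> (complex \<Rightarrow> complex) \<Rightarrow> bool) \<Rightarrow> real \<Rightarrow> real \<Rightarrow> bool" where
  "Imu_bounded \<mu> Sp g1 g2 \<longleftrightarrow>
     (\<forall>f. Sp g1 f \<longrightarrow> Imu_defined \<mu> f \<and> Sp g2 (Imu \<mu> f)) \<and>
     (\<exists>C. \<forall>f. Sp g1 f \<longrightarrow> wnorm g2 (Imu \<mu> f) \<le> C * wnorm g1 f)"

definition moment :: "real measure \<Rightarrow> nat \<Rightarrow> real" where
  "moment \<mu> n = (\<integral>t. t ^ n \<partial>\<mu>)"

definition carleson :: "real \<Rightarrow> real measure \<Rightarrow> bool" where
  "carleson s \<mu> \<longleftrightarrow> (\<lambda>t. measure \<mu> {t..<1}) \<in> O[at_left 1](\<lambda>t. (1 - t) powr s)"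

end

theory Submission
  imports Defs
begin


lemma dyad:
  fixes y :: real assumes "0 < y" "y \<le> 1"
  shows "\<exists>k. (1/2)^(Suc k) < y \<and> y \<le> (1/2)^k"
proof -
  have ex: "\<exists>n. (1/2::real)^n < y" using real_arch_pow_inv[of y "1/2"] assms by simp
  define k0 where "k0 = (LEAST n. (1/2::real)^n < y)"
  have k0: "(1/2::real)^k0 < y" unfolding k0_def using LeastI_ex[OF ex] .
  have "k0 \<noteq> 0" using k0 assms by (intro notI) simp
  then obtain k where kk: "k0 = Suc k" by (cases k0) auto
  have "\<not> (1/2::real)^k < y"
  proof
    assume "(1/2::real)^k < y"
    then have "k0 \<le> k" unfolding k0_def by (rule Least_le)
    then show False using kk by simp
  qed
  then show ?thesis using k0 kk by auto
qed

definition ndist :: "nat \<Rightarrow> nat \<Rightarrow> nat" where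
  "ndist j n = (if j \<le> n then n - j else j - n)"

lemma geom_dist:
  fixes x :: real assumes x: "0 \<le> x" "x < 1"
  shows "summable (\<lambda>j. x ^ ndist j n) \<and> (\<Sum>j. x ^ ndist j n) \<le> 2 / (1 - x)"
proof -
  have sh: "(\<lambda>j. x ^ ndist (j + n) n) = (\<lambda>j. x ^ j)"
    by (rule ext) (simp add: ndist_def)
  have sg: "summable (\<lambda>j. x ^ j)" using x by (simp add: summable_geometric)
  have summ: "summable (\<lambda>j. x ^ ndist j n)"
    using summable_iff_shift[of "\<lambda>j. x ^ ndist j n" n] sh sg by simp
  have geo: "(\<Sum>j. x ^ j) = 1 / (1 - x)" using x by (simp add: suminf_geometric)
  have sp: "(\<Sum>j. x ^ ndist j n) = (\<Sum>j. x ^ j) + (\<Sum>j<n. x ^ ndist j n)"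
    using suminf_split_initial_segment[OF summ, of n] sh by simp
  have "(\<Sum>j<n. x ^ ndist j n) \<le> (\<Sum>j<n. x ^ (n - Suc j))"
    by (intro sum_mono power_decreasing) (use x in \<open>auto simp: ndist_def\<close>)
  also have "\<dots> = (\<Sum>j<n. x ^ j)" by (rule sum.nat_diff_reindex)
  also have "\<dots> \<le> (\<Sum>j. x ^ j)" using x by (intro sum_le_suminf sg) auto
  finally have "(\<Sum>j<n. x ^ ndist j n) \<le> 1 / (1 - x)" using geo by simp
  then have "(\<Sum>j. x ^ ndist j n) \<le> 1 / (1 - x) + 1 / (1 - x)" using sp geo by simp
  also have "\<dots> = 2 / (1 - x)" by (simp add: add_divide_distrib[symmetric])
  finally show ?thesis using summ by simp
qed



locale msetup =
  fixes \<mu> :: "real measure"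
  assumes fin: "finite_measure \<mu>" and sp: "space \<mu> = {0..<1}"
    and st: "sets \<mu> = sets (restrict_space borel {0..<1})"
begin

interpretation finite_measure \<mu> by (rule fin)

lemma meas_borel: "f \<in> borel_measurable borel \<Longrightarrow> f \<in> borel_measurable \<mu>"
  by (subst measurable_cong_sets[OF st refl]) (rule measurable_restrict_space1)

lemma meas_cont: "continuous_on {0..<1} f \<Longrightarrow> f \<in> borel_measurable \<mu>"
  by (subst measurable_cong_sets[OF st refl]) (rule borel_measurable_continuous_on_restrict)

lemma tail_sets: "0 \<le> t \<Longrightarrow> {t..<1} \<in> sets \<mu>"
  unfolding st by (subst sets_restrict_space_iff) auto

lemma tail_sum:
  assumes K: "\<forall>t\<in>{0..<1}. measure \<mu> {t..<1} \<le> K * (1-t) powr s"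
    and c: "\<And>j. 0 \<le> c j" and summ: "summable (\<lambda>j. c j * ((1/2)^j) powr s)"
    and gm: "g \<in> borel_measurable \<mu>" and g0: "\<And>t. t\<in>{0..<1} \<Longrightarrow> 0 \<le> g t"
    and gb: "\<And>t. t\<in>{0..<1} \<Longrightarrow> \<exists>k. 1 - (1/2)^k \<le> t \<and> g t \<le> c k"
  shows "integrable \<mu> g \<and> integral\<^sup>L \<mu> g \<le> K * (\<Sum>j. c j * ((1/2)^j) powr s)"
proof -
  have K0: "0 \<le> K" using K[rule_format, of 0] measure_nonneg[of \<mu> "{0..<1}"] by (simp del: measure_nonneg)
  define A where "A j = {1 - (1/2::real)^j..<1}" for j :: nat
  have Asets[measurable]: "A j \<in> sets \<mu>" for j
    unfolding A_def by (rule tail_sets) (simp add: power_le_one)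
  have "(\<integral>\<^sup>+t. ennreal (g t) \<partial>\<mu>) \<le> (\<integral>\<^sup>+t. (\<Sum>j. ennreal (c j) * indicator (A j) t) \<partial>\<mu>)"
  proof (rule nn_integral_mono)
    fix t assume "t \<in> space \<mu>"
    then have t: "t \<in> {0..<1}" using sp by simp
    obtain k where k: "1 - (1/2)^k \<le> t" "g t \<le> c k" using gb[OF t] by blast
    have "ennreal (g t) \<le> ennreal (c k) * indicator (A k) t"
      using k t by (simp add: A_def indicator_def ennreal_leI)
    also have "\<dots> \<le> (\<Sum>j. ennreal (c j) * indicator (A j) t)"
      using ennreal_suminf_lessD[of "\<lambda>j. ennreal (c j) * indicator (A j) t" "ennreal (c k) * indicator (A k) t" k]
      by (meson not_le less_irrefl)
    finally show "ennreal (g t) \<le> (\<Sum>j. ennreal (c j) * indicator (A j) t)" .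
  qed
  also have "\<dots> = (\<Sum>j. ennreal (c j) * emeasure \<mu> (A j))"
    by (subst nn_integral_suminf) (measurable, simp add: Asets nn_integral_cmult_indicator)
  also have "\<dots> \<le> (\<Sum>j. ennreal (K * (c j * ((1/2)^j) powr s)))"
  proof (rule suminf_le[OF _ summableI summableI])
    fix j
    have "measure \<mu> (A j) \<le> K * ((1/2)^j) powr s"
      using K[rule_format, of "1 - (1/2)^j"] by (simp add: A_def power_le_one)
    then have "ennreal (c j) * emeasure \<mu> (A j) \<le> ennreal (c j) * ennreal (K * ((1/2)^j) powr s)"
      by (simp add: emeasure_eq_measure mult_left_mono ennreal_leI)
    also have "\<dots> = ennreal (K * (c j * ((1/2)^j) powr s))"
      using c[of j] by (simp add: ennreal_mult'[symmetric] mult_ac)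
    finally show "ennreal (c j) * emeasure \<mu> (A j) \<le> ennreal (K * (c j * ((1/2)^j) powr s))" .
  qed
  also have "\<dots> = ennreal (K * (\<Sum>j. c j * ((1/2)^j) powr s))"
    apply (rule suminf_ennreal_eq)
    using K0 c apply simp
    by (intro sums_mult summable_sums summ)
  finally have le: "(\<integral>\<^sup>+t. ennreal (g t) \<partial>\<mu>) \<le> ennreal (K * (\<Sum>j. c j * ((1/2)^j) powr s))" .
  have int: "integrable \<mu> g"
    apply (rule integrableI_nonneg[OF gm])
    using g0 sp apply (intro AE_I2) apply simp
    using le by (simp add: le_less_trans)
  have "ennreal (integral\<^sup>L \<mu> g) \<le> ennreal (K * (\<Sum>j. c j * ((1/2)^j) powr s))"
    using le by (subst nn_integral_eq_integral[symmetric]) (use int g0 sp in \<open>auto intro: AE_I2\<close>)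
  moreover have "0 \<le> K * (\<Sum>j. c j * ((1/2)^j) powr s)"
    using K0 c by (intro mult_nonneg_nonneg suminf_nonneg summ) auto
  ultimately show ?thesis using int by (simp add: ennreal_le_iff)
qed

lemma half_pow: "((1/2::real)^j) powr e = 2 powr (- (real j * e))"
proof -
  have "(1/2::real)^j = 2 powr (- real j)"
    by (simp add: powr_minus_divide powr_realpow power_one_over)
  then show ?thesis by (simp add: powr_powr)
qed

lemma main_est:
  assumes K: "\<forall>t\<in>{0..<1}. measure \<mu> {t..<1} \<le> K * (1-t) powr s"
    and s: "0 < s" and g: "0 \<le> \<gamma>" "\<gamma> < s" and a: "s - \<gamma> < a"
  shows "\<exists>C. \<forall>h. 0 < h \<and> h \<le> 1 \<longrightarrow>
     integrable \<mu> (\<lambda>t. (1-t) powr (-\<gamma>) * (h + (1-t)) powr (-a)) \<and>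
     (\<integral>t. (1-t) powr (-\<gamma>) * (h + (1-t)) powr (-a) \<partial>\<mu>) \<le> C * h powr (s - \<gamma> - a)"
proof -
  define p where "p = a + \<gamma> - s"
  define q where "q = s - \<gamma>"
  define r0 where "r0 = min p q"
  define x where "x = (2::real) powr (-r0)"
  have p: "0 < p" and q: "0 < q" and r0: "0 < r0" "r0 \<le> p" "r0 \<le> q"
    using a g by (auto simp: p_def q_def r0_def)
  have x: "0 \<le> x" "x < 1" unfolding x_def using r0 by (auto intro: powr_less_one)
  have a0: "0 < a" using a g by simp
  define C where "C = K * (2 powr s * 2 powr p * (2/(1-x)))"
  show ?thesis
  proof (intro exI allI impI)
    fix h :: real assume h: "0 < h \<and> h \<le> 1"
    obtain n where n: "(1/2)^(Suc n) < h" "h \<le> (1/2)^n" using dyad[of h] h by auto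
    define m where "m = Suc n"
    define c where "c j = 2 powr (real (Suc j) * \<gamma>) * min (2 powr (real (Suc j) * a)) (2 powr (real m * a))" for j :: nat
    define gg where "gg t = (1-t) powr (-\<gamma>) * (h + (1-t)) powr (-a)" for t :: real
    have c0: "0 \<le> c j" for j unfolding c_def by simp
    have tm: "c j * ((1/2)^j) powr s \<le> 2 powr s * 2 powr (real m * p) * x ^ ndist j n" for j
    proof -
      have xe: "x ^ ndist j n = 2 powr (- (real (ndist j n) * r0))"
        unfolding x_def by (simp add: powr_power)
      have rhs: "2 powr s * 2 powr (real m * p) * x ^ ndist j n = 2 powr (s + real m * p - real (ndist j n) * r0)"
        unfolding xe by (simp add: powr_add[symmetric] powr_diff)
      show ?thesis
      proof (cases "j \<le> n")
        case True
        have "c j * ((1/2)^j) powr s \<le> 2 powr (real (Suc j) * \<gamma>) * 2 powr (real (Suc j) * a) * 2 powr (- (real j * s))"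
          unfolding c_def half_pow by (intro mult_right_mono mult_left_mono) auto
        also have "\<dots> = 2 powr (real (Suc j) * \<gamma> + real (Suc j) * a - real j * s)"
          by (simp add: powr_add[symmetric])
        also have "\<dots> \<le> 2 powr (s + real m * p - real (ndist j n) * r0)"
        proof (rule powr_mono)
          have nd: "real (ndist j n) = real n - real j" using True by (simp add: ndist_def of_nat_diff)
          have "real (ndist j n) * r0 \<le> real (ndist j n) * p" using r0 by (intro mult_left_mono) auto
          then show "real (Suc j) * \<gamma> + real (Suc j) * a - real j * s \<le> s + real m * p - real (ndist j n) * r0"
            unfolding nd m_def p_def by (simp add: algebra_simps)
        qed simp
        finally show ?thesis using rhs by simp
      next
        case False
        have "c j * ((1/2)^j) powr s \<le> 2 powr (real (Suc j) * \<gamma>) * 2 powr (real m * a) * 2 powr (- (real j * s))"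
          unfolding c_def half_pow by (intro mult_right_mono mult_left_mono) auto
        also have "\<dots> = 2 powr (real (Suc j) * \<gamma> + real m * a - real j * s)"
          by (simp add: powr_add[symmetric])
        also have "\<dots> \<le> 2 powr (s + real m * p - real (ndist j n) * r0)"
        proof (rule powr_mono)
          have nd: "real (ndist j n) = real j - real n" using False by (simp add: ndist_def of_nat_diff)
          have "real (ndist j n) * r0 \<le> real (ndist j n) * q" using r0 by (intro mult_left_mono) auto
          then show "real (Suc j) * \<gamma> + real m * a - real j * s \<le> s + real m * p - real (ndist j n) * r0"
            unfolding nd m_def p_def q_def by (simp add: algebra_simps)
        qed simp
        finally show ?thesis using rhs by simp
      qed
    qed
    obtain gs: "summable (\<lambda>j. x ^ ndist j n)" and gsl: "(\<Sum>j. x ^ ndist j n) \<le> 2 / (1 - x)"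
      using geom_dist[OF x] by blast
    have gs2: "summable (\<lambda>j. 2 powr s * 2 powr (real m * p) * x ^ ndist j n)"
      by (intro summable_mult gs)
    have summ: "summable (\<lambda>j. c j * ((1/2)^j) powr s)"
      by (rule summable_comparison_test[OF _ gs2]) (use tm c0 in \<open>auto intro!: exI[of _ 0]\<close>)
    have "(\<Sum>j. c j * ((1/2)^j) powr s) \<le> (\<Sum>j. 2 powr s * 2 powr (real m * p) * x ^ ndist j n)"
      by (intro suminf_le tm summ gs2)
    also have "\<dots> = 2 powr s * 2 powr (real m * p) * (\<Sum>j. x ^ ndist j n)"
      by (intro suminf_mult gs)
    also have "\<dots> \<le> 2 powr s * 2 powr (real m * p) * (2 / (1 - x))"
      by (intro mult_left_mono gsl) auto
    finally have sumle: "(\<Sum>j. c j * ((1/2)^j) powr s) \<le> 2 powr s * 2 powr (real m * p) * (2 / (1 - x))" .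
    have gm: "gg \<in> borel_measurable \<mu>" unfolding gg_def by (intro meas_borel) measurable
    have g0: "0 \<le> gg t" for t unfolding gg_def by simp
    have gb: "\<exists>k. 1 - (1/2)^k \<le> t \<and> gg t \<le> c k" if t: "t \<in> {0..<1}" for t
    proof -
      have y: "0 < 1 - t" "1 - t \<le> 1" using t by auto
      obtain k where k: "(1/2)^(Suc k) < 1 - t" "1 - t \<le> (1/2)^k" using dyad[OF y] by blast
      have e1: "(1-t) powr (-\<gamma>) \<le> 2 powr (real (Suc k) * \<gamma>)"
      proof -
        have "(1-t) powr (-\<gamma>) \<le> ((1/2)^(Suc k)) powr (-\<gamma>)"
          using k g by (intro powr_mono2') auto
        then show ?thesis by (simp only: half_pow) simp
      qed
      have e2: "(h + (1-t)) powr (-a) \<le> 2 powr (real (Suc k) * a)"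
      proof -
        have "(h + (1-t)) powr (-a) \<le> ((1/2)^(Suc k)) powr (-a)"
          using k a0 h by (intro powr_mono2') auto
        then show ?thesis by (simp only: half_pow) simp
      qed
      have e3: "(h + (1-t)) powr (-a) \<le> 2 powr (real m * a)"
      proof -
        have "(h + (1-t)) powr (-a) \<le> ((1/2)^m) powr (-a)"
          using n a0 h y unfolding m_def by (intro powr_mono2') auto
        then show ?thesis by (simp only: half_pow) simp
      qed
      have "gg t \<le> c k" unfolding gg_def c_def
        using e1 e2 e3 by (intro mult_mono) auto
      moreover have "1 - (1/2)^k \<le> t" using k by simp
      ultimately show ?thesis by blast
    qed
    have ts: "integrable \<mu> gg \<and> integral\<^sup>L \<mu> gg \<le> K * (\<Sum>j. c j * ((1/2)^j) powr s)"
      by (rule tail_sum[OF K c0 summ gm g0 gb])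
    have K0: "0 \<le> K" using K[rule_format, of 0] measure_nonneg[of \<mu> "{0..<1}"] by (simp del: measure_nonneg)
    have pw: "2 powr (real m * p) \<le> 2 powr p * h powr (s - \<gamma> - a)"
    proof -
      have "2 powr (real m * p) = 2 powr p * ((1/2)^n) powr (-p)"
        unfolding half_pow m_def by (simp add: powr_add[symmetric] algebra_simps)
      also have "((1/2::real)^n) powr (-p) \<le> h powr (-p)"
        using n h p by (intro powr_mono2') auto
      finally have "2 powr (real m * p) \<le> 2 powr p * h powr (-p)" by (simp add: mult_left_mono)
      moreover have "-p = s - \<gamma> - a" by (simp add: p_def)
      ultimately show ?thesis by metis
    qed
    have "integral\<^sup>L \<mu> gg \<le> K * (2 powr s * 2 powr (real m * p) * (2 / (1 - x)))"
      using ts sumle K0 by (meson mult_left_mono order_trans)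
    also have "\<dots> \<le> K * (2 powr s * (2 powr p * h powr (s - \<gamma> - a)) * (2 / (1 - x)))"
      using pw K0 x by (intro mult_left_mono mult_right_mono) auto
    also have "\<dots> = C * h powr (s - \<gamma> - a)" unfolding C_def by simp
    finally show "integrable \<mu> (\<lambda>t. (1-t) powr (-\<gamma>) * (h + (1-t)) powr (-a)) \<and>
     (\<integral>t. (1-t) powr (-\<gamma>) * (h + (1-t)) powr (-a) \<partial>\<mu>) \<le> C * h powr (s - \<gamma> - a)"
      using ts unfolding gg_def by simp
  qed
qed

end


lemma pow_bern: "0 \<le> (t::real) \<Longrightarrow> t \<le> 1 \<Longrightarrow> t^k * (1 + real k * (1-t)) \<le> 1"
proof (induction k)
  case 0 then show ?case by simp
next
  case (Suc k)
  have "t^Suc k * (1 + real (Suc k) * (1-t)) = t * (t^k * (1 + real k * (1-t))) + t^Suc k * (1-t)"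
    by (simp add: algebra_simps)
  also have "\<dots> \<le> t * 1 + 1 * (1-t)"
    using Suc by (intro add_mono mult_left_mono mult_right_mono) (auto simp: power_le_one mult_le_one)
  finally show ?case by simp
qed

context msetup begin
interpretation finite_measure \<mu> by (rule fin)

lemma carl_global:
  assumes "carleson s \<mu>" "0 < s"
  shows "\<exists>K. \<forall>t\<in>{0..<1}. measure \<mu> {t..<1} \<le> K * (1-t) powr s"
proof -
  obtain c where c: "c > 0" "eventually (\<lambda>t. norm (measure \<mu> {t..<1}) \<le> c * norm ((1-t) powr s)) (at_left (1::real))"
    using assms(1) unfolding carleson_def by (elim landau_o.bigE)
  obtain b where b: "b < 1" "\<forall>y>b. y < 1 \<longrightarrow> norm (measure \<mu> {y..<1}) \<le> c * norm ((1-y) powr s)"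
    using c(2) unfolding eventually_at_left_field by blast
  define t1 where "t1 = (max b 0 + 1) / 2"
  have t1: "b < t1" "0 \<le> t1" "t1 < 1" using b by (auto simp: t1_def)
  define M where "M = measure \<mu> (space \<mu>)"
  define K where "K = max c (M / (1 - t1) powr s)"
  show ?thesis
  proof (intro exI ballI)
    fix t :: real assume t: "t \<in> {0..<1}"
    show "measure \<mu> {t..<1} \<le> K * (1-t) powr s"
    proof (cases "b < t")
      case True
      then have "measure \<mu> {t..<1} \<le> c * (1-t) powr s" using b t by auto
      also have "\<dots> \<le> K * (1-t) powr s" by (intro mult_right_mono) (auto simp: K_def)
      finally show ?thesis .
    next
      case False
      have "measure \<mu> {t..<1} \<le> M" unfolding M_def by (rule bounded_measure)
      also have "M = M / (1 - t1) powr s * (1 - t1) powr s" using t1 by simp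
      also have "\<dots> \<le> M / (1 - t1) powr s * (1 - t) powr s"
        using False t1 t assms(2) by (intro mult_left_mono powr_mono2) (auto simp: M_def)
      also have "\<dots> \<le> K * (1-t) powr s" by (intro mult_right_mono) (auto simp: K_def)
      finally show ?thesis .
    qed
  qed
qed

lemma carl_of_global:
  assumes "\<forall>t\<in>{0..<1}. measure \<mu> {t..<1} \<le> K * (1-t) powr s"
  shows "carleson s \<mu>"
  unfolding carleson_def
proof (rule landau_o.bigI[of "max K 1"])
  show "eventually (\<lambda>t. norm (measure \<mu> {t..<1}) \<le> max K 1 * norm ((1-t) powr s)) (at_left (1::real))"
  proof (rule eventually_at_left_1)
    fix t :: real assume t: "0 < t" "t < 1"
    have "measure \<mu> {t..<1} \<le> K * (1-t) powr s" using assms t by auto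
    also have "\<dots> \<le> max K 1 * (1-t) powr s" by (intro mult_right_mono) auto
    finally show "norm (measure \<mu> {t..<1}) \<le> max K 1 * norm ((1-t) powr s)" by simp
  qed
  show "0 < max K 1" by simp
qed

lemma moment_carl:
  assumes "(\<lambda>n. moment \<mu> n) \<in> O(\<lambda>n. 1 / real n powr s)" "0 < s"
  shows "carleson s \<mu>"
proof -
  obtain c where c: "c > 0" "eventually (\<lambda>n. norm (moment \<mu> n) \<le> c * norm (1 / real n powr s)) sequentially"
    using assms(1) by (elim landau_o.bigE)
  obtain N where N: "\<And>n. n \<ge> N \<Longrightarrow> norm (moment \<mu> n) \<le> c * norm (1 / real n powr s)"
    using c(2) unfolding eventually_sequentially by blast
  define b where "b = 1 - 1 / (4 * (real N + 1))"
  have b: "b < 1" unfolding b_def by simp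
  show ?thesis unfolding carleson_def
  proof (rule landau_o.bigI[of "2 * c * 4 powr s"])
    show "0 < 2 * c * 4 powr s" using c by simp
    show "eventually (\<lambda>t. norm (measure \<mu> {t..<1}) \<le> 2 * c * 4 powr s * norm ((1-t) powr s)) (at_left (1::real))"
      unfolding eventually_at_left_field
    proof (intro exI[of _ b] conjI allI impI b)
      fix t :: real assume t: "b < t" "t < 1"
      define y where "y = 1 - t"
      have y: "0 < y" "y < 1 / (4 * (real N + 1))" using t by (auto simp: y_def b_def)
      have y4: "y \<le> 1/4"
      proof -
        have "1 / (4 * (real N + 1)) \<le> 1/4" by (simp add: field_simps)
        then show ?thesis using y by linarith
      qed
      have t0: "0 \<le> t" using y4 by (simp add: y_def)
      define n where "n = nat \<lfloor>1 / (2*y)\<rfloor>"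
      have fl: "real n \<le> 1 / (2*y)" "1 / (2*y) - 1 < real n"
        unfolding n_def using y by (auto simp: of_nat_nat)
      have q4: "1 / (4*y) \<ge> 1" using y y4 by (simp add: field_simps)
      have big: "real N + 1 < 1 / (4*y)" using y by (simp add: field_simps)
      have n4: "1 / (4*y) \<le> real n"
      proof -
        have "1 / (2*y) = 2 * (1 / (4*y))" by (simp add: field_simps)
        then show ?thesis using fl q4 by linarith
      qed
      have nN: "N \<le> n" using n4 big by linarith
      have npos: "0 < real n" using n4 q4 by linarith
      have tn: "1/2 \<le> t^n"
      proof -
        have "1 + real n * (-y) \<le> (1 + (-y))^n" by (rule Bernoulli_inequality) (use y4 in auto)
        moreover have "real n * y \<le> 1/2" using fl y by (simp add: field_simps)
        ultimately show ?thesis unfolding y_def by (simp add: algebra_simps)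
      qed
      have A: "{t..<1} \<in> sets \<mu>" by (rule tail_sets[OF t0])
      have "measure \<mu> {t..<1} / 2 = (\<integral>x. indicator {t..<1} x * (1/2::real) \<partial>\<mu>)"
        using A sp t0 by (simp add: integral_indicator Int_absorb2)
      also have "\<dots> \<le> (\<integral>x. x ^ n \<partial>\<mu>)"
      proof (rule integral_mono)
        show "integrable \<mu> (\<lambda>x. indicator {t..<1} x * (1/2::real))" using A by (intro integrable_mult_right_iff[THEN iffD2] disjI2 integrable_real_indicator) (auto simp: less_top[symmetric])
        show "integrable \<mu> (\<lambda>x. x ^ n)"
          by (rule integrable_const_bound[where B=1]) (auto simp: sp power_le_one intro!: AE_I2 meas_borel)
        fix x assume "x \<in> space \<mu>"
        then have x: "0 \<le> x" "x < 1" using sp by auto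
        show "indicator {t..<1} x * (1/2::real) \<le> x ^ n"
        proof (cases "t \<le> x")
          case True
          then have "t^n \<le> x^n" using t0 by (intro power_mono) auto
          then show ?thesis using tn True x by (simp add: indicator_def)
        qed (use x in \<open>auto simp: indicator_def\<close>)
      qed
      also have "\<dots> = moment \<mu> n" by (simp add: moment_def)
      also have "\<dots> \<le> c * norm (1 / real n powr s)" using N[OF nN] by simp
      also have "\<dots> = c / real n powr s" using npos by simp
      also have "\<dots> \<le> c / (1 / (4*y)) powr s"
        using c y q4 n4 assms(2) npos by (intro divide_left_mono powr_mono2 mult_pos_pos) auto
      also have "\<dots> = c * 4 powr s * y powr s"
        using y by (simp add: powr_divide powr_mult)
      finally have "measure \<mu> {t..<1} \<le> 2 * c * 4 powr s * y powr s" by simp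
      then show "norm (measure \<mu> {t..<1}) \<le> 2 * c * 4 powr s * norm ((1-t) powr s)"
        by (simp add: y_def)
    qed
  qed
qed


lemma carl_moment:
  assumes K: "\<forall>t\<in>{0..<1}. measure \<mu> {t..<1} \<le> K * (1-t) powr s" and s: "0 < s"
  shows "(\<lambda>n. moment \<mu> n) \<in> O(\<lambda>n. 1 / real n powr s)"
proof -
  define m :: nat where "m = nat \<lceil>s\<rceil> + 1"
  have m: "s < real m" "1 \<le> m" unfolding m_def using s by linarith+
  obtain C where C: "\<And>h. 0 < h \<Longrightarrow> h \<le> 1 \<Longrightarrow>
      integrable \<mu> (\<lambda>t. (1-t) powr (-0) * (h + (1-t)) powr (- real m)) \<and>
      (\<integral>t. (1-t) powr (-0) * (h + (1-t)) powr (- real m) \<partial>\<mu>) \<le> C * h powr (s - 0 - real m)"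
    using main_est[OF K s, of 0 "real m"] m s by auto
  define B where "B = (2 * real m)^m * C"
  show ?thesis
  proof (rule landau_o.bigI[of "max B 1"])
    show "0 < max B 1" by simp
    show "eventually (\<lambda>n. norm (moment \<mu> n) \<le> max B 1 * norm (1 / real n powr s)) sequentially"
      unfolding eventually_sequentially
    proof (intro exI[of _ m] allI impI)
      fix n assume nm: "m \<le> n"
      have npos: "0 < real n" using nm m by simp
      define h where "h = 1 / real n"
      have h: "0 < h" "h \<le> 1" using npos nm m by (auto simp: h_def)
      define G where "G t = (h + (1-t)) powr (- real m)" for t
      have Gi: "integrable \<mu> G \<and> integral\<^sup>L \<mu> G \<le> C * h powr (s - real m)"
      proof -
        have eq: "\<And>t. t \<in> space \<mu> \<Longrightarrow> (1-t) powr (-0) * (h + (1-t)) powr (- real m) = G t"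
          using sp by (auto simp: G_def)
        have e1: "integrable \<mu> (\<lambda>t. (1-t) powr (-0) * (h + (1-t)) powr (- real m)) = integrable \<mu> G"
          by (rule Bochner_Integration.integrable_cong[OF refl eq])
        have e2: "(\<integral>t. (1-t) powr (-0) * (h + (1-t)) powr (- real m) \<partial>\<mu>) = integral\<^sup>L \<mu> G"
          by (rule Bochner_Integration.integral_cong[OF refl eq])
        show ?thesis using C[OF h] unfolding e1 e2 by simp
      qed
      define k where "k = n div m"
      have k1: "1 \<le> k" using div_le_mono[OF nm, of m] m by (simp add: k_def)
      have km: "k * m \<le> n" unfolding k_def by simp
      have n2: "real n \<le> 2 * real m * real k"
      proof -
        have e: "n = k*m + n mod m" by (simp add: k_def)
        have "n mod m < m" using m by simp
        then have "n < (k+1) * m" using e by (simp add: algebra_simps)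
        also have "(k+1) * m \<le> 2 * m * k" using k1 by simp
        finally have "n \<le> 2 * m * k" by simp
        then have "real n \<le> real (2 * m * k)" by (rule of_nat_mono)
        then show ?thesis by simp
      qed
      have pw: "t ^ n \<le> (2 * real m)^m * (1 / real n ^ m) * G t" if t: "t \<in> space \<mu>" for t
      proof -
        have t: "0 \<le> t" "t < 1" using t sp by auto
        define y where "y = 1 - t"
        have y: "0 < y" using t by (simp add: y_def)
        have "t ^ n \<le> t ^ (k * m)" using km t by (intro power_decreasing) auto
        also have "\<dots> = (t^k)^m" by (simp add: power_mult)
        finally have a1: "t^n \<le> (t^k)^m" .
        have "t^n * (1 + real n * y)^m \<le> (t^k)^m * (2 * real m * (1 + real k * y))^m"
        proof (intro mult_mono power_mono a1)
          show "1 + real n * y \<le> 2 * real m * (1 + real k * y)"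
          proof -
            have "real n * y \<le> 2 * real m * real k * y" by (rule mult_right_mono[OF n2]) (use y in auto)
            moreover have "1 \<le> 2 * real m" using m by simp
            ultimately show ?thesis by (simp add: algebra_simps)
          qed
        qed (use t y in auto)
        also have "\<dots> = (2 * real m)^m * (t^k * (1 + real k * y))^m"
          by (simp add: power_mult_distrib)
        also have "\<dots> \<le> (2 * real m)^m * 1"
          using pow_bern[of t k] t y by (intro mult_left_mono power_le_one) (auto simp: y_def)
        finally have a2: "t^n * (1 + real n * y)^m \<le> (2 * real m)^m" by simp
        have Gt: "G t = 1 / (h + y)^m"
          using h y by (simp add: G_def y_def powr_minus_divide powr_realpow)
        have hy: "(1 + real n * y) = real n * (h + y)" using npos by (simp add: h_def algebra_simps)
        have pos: "0 < (1 + real n * y)^m" using y npos by (intro zero_less_power) (simp add: add_pos_nonneg)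
        have "t ^ n \<le> (2 * real m)^m / (1 + real n * y)^m"
          using a2 pos by (simp add: field_simps)
        also have "\<dots> = (2 * real m)^m * (1 / real n ^ m) * G t"
          unfolding Gt hy by (simp add: power_mult_distrib)
        finally show ?thesis .
      qed
      have mom: "moment \<mu> n \<le> (2 * real m)^m * (1 / real n ^ m) * (C * h powr (s - real m))"
      proof -
        have "moment \<mu> n \<le> (\<integral>t. (2 * real m)^m * (1 / real n ^ m) * G t \<partial>\<mu>)"
          unfolding moment_def
        proof (rule integral_mono)
          show "integrable \<mu> (\<lambda>x. x ^ n)"
            by (rule integrable_const_bound[where B=1]) (auto simp: sp power_le_one intro!: AE_I2 meas_borel)
          show "integrable \<mu> (\<lambda>t. (2 * real m)^m * (1 / real n ^ m) * G t)" using Gi by simp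
        qed (rule pw)
        also have "\<dots> = (2 * real m)^m * (1 / real n ^ m) * integral\<^sup>L \<mu> G" by simp
        also have "\<dots> \<le> (2 * real m)^m * (1 / real n ^ m) * (C * h powr (s - real m))"
          using Gi by (intro mult_left_mono) auto
        finally show ?thesis .
      qed
      have "(1 / real n ^ m) * h powr (s - real m) = 1 / real n powr s"
      proof -
        have "h powr (s - real m) = real n powr (real m - s)"
          unfolding h_def using npos by (simp add: powr_divide powr_minus_divide[symmetric] algebra_simps)
        also have "\<dots> = real n ^ m / real n powr s"
          using npos by (simp add: powr_diff powr_realpow)
        finally show ?thesis using npos by simp
      qed
      moreover have "(2 * real m)^m * (1 / real n ^ m) * (C * h powr (s - real m)) = B * ((1 / real n ^ m) * h powr (s - real m))"
        by (simp add: B_def algebra_simps)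
      ultimately have "moment \<mu> n \<le> B * (1 / real n powr s)"
        using mom by simp
      also have "\<dots> \<le> max B 1 * (1 / real n powr s)" by (intro mult_right_mono) auto
      finally have "moment \<mu> n \<le> max B 1 * (1 / real n powr s)" .
      moreover have "0 \<le> moment \<mu> n" unfolding moment_def using sp
        by (intro integral_nonneg_AE AE_I2) auto
      ultimately show "norm (moment \<mu> n) \<le> max B 1 * norm (1 / real n powr s)" by simp
    qed
  qed
qed

end


lemma den_bound:
  fixes z :: complex and t :: real
  assumes t: "0 \<le> t" "t \<le> 1" and z: "norm z < 1"
  shows "1 - t * norm z \<le> norm (1 - of_real t * z)"
    and "1 - norm z \<le> norm (1 - of_real t * z)"
    and "1 - t \<le> norm (1 - of_real t * z)"
    and "((1 - norm z) + (1 - t)) / 2 \<le> norm (1 - of_real t * z)"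
proof -
  have "norm (of_real t * z) = t * norm z" using t by (simp add: norm_mult)
  then have a: "1 - t * norm z \<le> norm (1 - of_real t * z)"
    using norm_triangle_ineq2[of 1 "of_real t * z"] by simp
  then show "1 - t * norm z \<le> norm (1 - of_real t * z)" .
  have b1: "t * norm z \<le> norm z" using t by (simp add: mult_left_le_one_le)
  have b2: "t * norm z \<le> t" using t z by (simp add: mult_left_le)
  have b3: "2 * (t * norm z) \<le> t + norm z"
  proof -
    have "0 \<le> (1 - t) * norm z + t * (1 - norm z)" using t z by simp
    then show ?thesis by (simp add: algebra_simps)
  qed
  show "1 - norm z \<le> norm (1 - of_real t * z)" using a b1 by linarith
  show "1 - t \<le> norm (1 - of_real t * z)" using a b2 by linarith
  have "((1 - norm z) + (1 - t)) / 2 \<le> 1 - t * norm z" using b3 by (simp add: field_simps)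
  then show "((1 - norm z) + (1 - t)) / 2 \<le> norm (1 - of_real t * z)" using a by linarith
qed

lemma vw_pos: "norm z < 1 \<Longrightarrow> 0 < vw g z"
  by (simp add: vw_def)

lemma vw_nonneg: "0 \<le> vw g z"
  by (simp add: vw_def)

lemma Hinf_bound: "Hinf g f \<Longrightarrow> z \<in> ball 0 1 \<Longrightarrow> vw g z * norm (f z) \<le> wnorm g f"
  unfolding Hinf_def wnorm_def
  by (intro cSUP_upper bounded_imp_bdd_above) auto

lemma wnorm_le: "(\<And>z. z \<in> ball 0 1 \<Longrightarrow> vw g z * norm (f z) \<le> B) \<Longrightarrow> wnorm g f \<le> B"
  unfolding wnorm_def by (rule cSUP_least) auto

lemma wnorm_nonneg: "Hinf g f \<Longrightarrow> 0 \<le> wnorm g f"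
  using Hinf_bound[of g f 0] vw_nonneg[of g 0] by (simp add: order_trans[rotated])

lemma Hinf_intro:
  assumes "f holomorphic_on ball 0 1" "\<And>z. z \<in> ball 0 1 \<Longrightarrow> vw g z * norm (f z) \<le> B"
  shows "Hinf g f"
  unfolding Hinf_def bounded_iff
  using assms vw_nonneg by (intro conjI exI[of _ B]) (auto simp: abs_mult)

lemma Hinf_real_bound:
  assumes "Hinf g f" "0 \<le> t" "t < 1"
  shows "norm (f (of_real t)) \<le> wnorm g f * (1 - t) powr (-g)"
proof -
  have "vw g (of_real t) * norm (f (of_real t)) \<le> wnorm g f"
    using Hinf_bound[OF assms(1), of "of_real t"] assms by simp
  moreover have "vw g (of_real t) = (1 - t) powr g" using assms by (simp add: vw_def)
  ultimately have "(1-t) powr g * norm (f (of_real t)) \<le> wnorm g f" by simp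
  then have "(1-t) powr (-g) * ((1-t) powr g * norm (f (of_real t))) \<le> (1-t) powr (-g) * wnorm g f"
    by (intro mult_left_mono) auto
  then show ?thesis using assms by (simp add: powr_minus field_simps)
qed

lemma small_weight:
  assumes "0 < g" "0 < c"
  shows "\<exists>r<1. \<forall>z\<in>ball (0::complex) 1. r < norm z \<longrightarrow> (1 - norm z) powr g < c"
proof (intro exI[of _ "1 - c powr (1/g)"] conjI ballI impI)
  show "1 - c powr (1/g) < 1" using assms by simp
  fix z :: complex assume z: "z \<in> ball 0 1" "1 - c powr (1/g) < norm z"
  then have "(1 - norm z) powr g < (c powr (1/g)) powr g"
    using assms by (intro powr_less_mono2) auto
  also have "\<dots> = c" using assms by (simp add: powr_powr)
  finally show "(1 - norm z) powr g < c" .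
qed

definition ft :: "real \<Rightarrow> real \<Rightarrow> complex \<Rightarrow> complex" where
  "ft g r z = (1 - of_real r * z) powr (- of_real g)"

lemma ft_holo:
  assumes "0 \<le> r" "r < 1"
  shows "ft g r holomorphic_on ball 0 1"
  unfolding ft_def
proof (intro holomorphic_intros)
  fix z :: complex assume z: "z \<in> ball 0 1"
  have "Re (of_real r * z) \<le> norm (of_real r * z)" by (rule complex_Re_le_cmod)
  also have "\<dots> = r * norm z" using assms by (simp add: norm_mult)
  also have "\<dots> < 1" using assms z by (metis dist_0_norm mem_ball mult_le_one less_eq_real_def
      mult_left_le_one_le norm_ge_zero le_less_trans)
  finally show "1 - of_real r * z \<notin> \<real>\<^sub>\<le>\<^sub>0" by (simp add: complex_nonpos_Reals_iff)
qed

lemma ft_norm: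
  "norm (ft g r z) = norm (1 - of_real r * z) powr (-g)"
  unfolding ft_def by (subst norm_powr_real_powr') auto

lemma ft_weight:
  assumes "0 \<le> r" "r < 1" "0 < g" "z \<in> ball 0 1"
  shows "vw g z * norm (ft g r z) \<le> 1"
proof -
  have nz: "norm z < 1" using assms by simp
  have d: "1 - norm z \<le> norm (1 - of_real r * z)" using den_bound(2)[of r z] assms nz by simp
  have "norm (1 - of_real r * z) powr (-g) \<le> (1 - norm z) powr (-g)"
    using d nz assms by (intro powr_mono2') auto
  then have "vw g z * norm (ft g r z) \<le> (1 - norm z) powr g * (1 - norm z) powr (-g)"
    unfolding ft_norm vw_def by (intro mult_left_mono) auto
  also have "\<dots> = 1" using nz by (simp add: powr_add[symmetric])
  finally show ?thesis .
qed

lemma ft_H0: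
  assumes "0 \<le> r" "r < 1" "0 < g"
  shows "H0 g (ft g r)" "Hinf g (ft g r)" "wnorm g (ft g r) \<le> 1"
proof -
  show H: "Hinf g (ft g r)" using ft_holo[OF assms(1,2)] ft_weight[OF assms] by (intro Hinf_intro) auto
  show "wnorm g (ft g r) \<le> 1" using ft_weight[OF assms] by (intro wnorm_le) auto
  have "\<exists>r'<1. \<forall>z\<in>ball 0 1. r' < norm z \<longrightarrow> vw g z * norm (ft g r z) < e" if e: "e > 0" for e
  proof -
    obtain r' where r': "r' < 1" "\<forall>z\<in>ball (0::complex) 1. r' < norm z \<longrightarrow> (1 - norm z) powr g < e * (1-r) powr g"
      using small_weight[of g "e * (1-r) powr g"] assms e by auto
    show ?thesis
    proof (intro exI[of _ r'] conjI ballI impI r'(1))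
      fix z :: complex assume z: "z \<in> ball 0 1" "r' < norm z"
      have nz: "norm z < 1" using z by simp
      have d: "1 - r \<le> norm (1 - of_real r * z)" using den_bound(3)[of r z] assms nz by simp
      have "norm (1 - of_real r * z) powr (-g) \<le> (1 - r) powr (-g)"
        using d assms by (intro powr_mono2') auto
      then have "vw g z * norm (ft g r z) \<le> (1 - norm z) powr g * (1 - r) powr (-g)"
        unfolding ft_norm vw_def by (intro mult_left_mono) auto
      also have "\<dots> < e * (1-r) powr g * (1 - r) powr (-g)"
      proof (rule mult_strict_right_mono)
        show "(1 - norm z) powr g < e * (1 - r) powr g" using r'(2) z by blast
      qed (use assms in auto)
      also have "\<dots> = e" using assms by (simp add: powr_add[symmetric] mult.assoc)
      finally show "vw g z * norm (ft g r z) < e" .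
    qed
  qed
  then show "H0 g (ft g r)" using H unfolding H0_def by blast
qed

lemma ft_real:
  assumes "0 \<le> r" "r \<le> 1" "0 \<le> t" "t \<le> 1"
  shows "ft g r (of_real t) = of_real ((1 - r * t) powr (-g))"
proof -
  have e1: "1 - of_real r * of_real t = (of_real (1 - r * t) :: complex)" by simp
  have e2: "- of_real g = (of_real (- g) :: complex)" by simp
  have "0 \<le> 1 - r * t" using assms by (simp add: mult_le_one)
  then show ?thesis unfolding ft_def e1 e2 by (rule powr_of_real)
qed



lemma fid0: fixes G T w z a b :: complex assumes a: "a \<noteq> 0" and b: "b \<noteq> 0" and ab: "b - a = T * (w - z)"
  shows "G/a - G/b - (w-z)*(G*T^1/b^2) = (w-z)^2 * (G*T^2/(a*b^2))"
proof -
  have 1: "G/a - G/b = G*(b-a)/(a*b)" using a b by (simp add: field_simps)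
  have 2: "(w-z)*(G*T^1/b^2) = G*(b-a)/b^2" unfolding ab by (simp add: algebra_simps)
  have 3: "G*(b-a)/(a*b) - G*(b-a)/b^2 = G*(b-a)^2/(a*b^2)"
    using a b by (simp add: field_simps power2_eq_square)
  have 4: "(b-a)^2 = T^2*(w-z)^2" unfolding ab by (simp add: power_mult_distrib)
  show ?thesis unfolding 1 2 3 4 by (simp add: algebra_simps)
qed
lemma fid: fixes G T w z :: complex assumes a: "1 - T*w \<noteq> 0" and b: "1 - T*z \<noteq> 0"
  shows "G/(1-T*w) - G/(1-T*z) - (w-z)*(G*T^1/(1-T*z)^2) = (w-z)^2 * (G*T^2/((1-T*w)*(1-T*z)^2))"
  by (rule fid0[OF a b]) (simp add: algebra_simps)

context msetup begin
interpretation finite_measure \<mu> by (rule fin)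

lemma id_meas[measurable]: "(\<lambda>t::real. t) \<in> borel_measurable \<mu>"
  by (rule meas_borel) simp

lemma ibound:
  fixes g :: "real \<Rightarrow> complex"
  assumes gm[measurable]: "g \<in> borel_measurable \<mu>" and gi: "integrable \<mu> (\<lambda>t. norm (g t))"
    and z: "norm z < 1"
  shows "integrable \<mu> (\<lambda>t. g t * of_real t ^ k / (1 - of_real t * z) ^ j)"
proof (rule Bochner_Integration.integrable_bound[where f = "\<lambda>t. norm (g t) / (1 - norm z) ^ j"])
  show "integrable \<mu> (\<lambda>t. norm (g t) / (1 - norm z) ^ j)" using gi by simp
  show "(\<lambda>t. g t * of_real t ^ k / (1 - of_real t * z) ^ j) \<in> borel_measurable \<mu>" by measurable
  show "AE t in \<mu>. norm (g t * of_real t ^ k / (1 - of_real t * z) ^ j) \<le> norm (norm (g t) / (1 - norm z) ^ j)"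
  proof (rule AE_I2)
    fix t assume "t \<in> space \<mu>"
    then have t: "0 \<le> t" "t < 1" using sp by auto
    have d: "1 - norm z \<le> norm (1 - of_real t * z)" using den_bound(2)[of t z] t z by simp
    have zz: "0 < 1 - norm z" using z by simp
    have "norm (g t * of_real t ^ k / (1 - of_real t * z) ^ j) = norm (g t) * t ^ k / norm (1 - of_real t * z) ^ j"
      using t by (simp add: norm_mult norm_divide norm_power)
    also have "\<dots> \<le> norm (g t) * 1 / (1 - norm z) ^ j"
      using t d zz by (intro divide_mono mult_left_mono power_le_one power_mono zero_less_power) auto
    finally show "norm (g t * of_real t ^ k / (1 - of_real t * z) ^ j) \<le> norm (norm (g t) / (1 - norm z) ^ j)"
      using zz by simp
  qed
qed

lemma holo_int:
  fixes g :: "real \<Rightarrow> complex"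
  assumes gm[measurable]: "g \<in> borel_measurable \<mu>" and gi: "integrable \<mu> (\<lambda>t. norm (g t))"
  shows "\<forall>z\<in>ball 0 1. integrable \<mu> (\<lambda>t. g t / (1 - of_real t * z))"
    and "(\<lambda>z. \<integral>t. g t / (1 - of_real t * z) \<partial>\<mu>) holomorphic_on ball 0 1"
proof -
  show I1: "\<forall>z\<in>ball 0 1. integrable \<mu> (\<lambda>t. g t / (1 - of_real t * z))"
    using ibound[OF gm gi, of _ 0 1] by simp
  define F where "F z = (\<integral>t. g t / (1 - of_real t * z) \<partial>\<mu>)" for z
  have "(F has_field_derivative (\<integral>t. g t * of_real t ^ 1 / (1 - of_real t * z) ^ 2 \<partial>\<mu>)) (at z)"
    if z: "z \<in> ball 0 1" for z
  proof -
    define D where "D = (\<integral>t. g t * of_real t ^ 1 / (1 - of_real t * z) ^ 2 \<partial>\<mu>)"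
    have nz: "norm z < 1" using z by simp
    define r where "r = (1 - norm z) / 2"
    have r: "0 < r" using nz by (simp add: r_def)
    define Mg where "Mg = (\<integral>t. norm (g t) \<partial>\<mu>)"
    define M where "M = Mg / (r * (1 - norm z)^2)"
    define Q where "Q w t = g t * of_real t ^ 2 / ((1 - of_real t * w) * (1 - of_real t * z) ^ 2)" for w t
    have key: "norm ((F w - F z) / (w - z) - D) \<le> M * norm (w - z)" if w: "dist w z < r" "w \<noteq> z" for w
    proof -
      have nw: "norm w < 1 - r"
        using w norm_triangle_ineq2[of w z] nz unfolding r_def dist_norm by (simp add: field_simps)
      have nw1: "norm w < 1" using nw r by simp
      have Qb: "norm (Q w t) \<le> norm (g t) / (r * (1 - norm z)^2)" if t: "t \<in> space \<mu>" for t
      proof -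
        have t: "0 \<le> t" "t < 1" using t sp by auto
        have d1: "r \<le> norm (1 - of_real t * w)" using den_bound(2)[of t w] t nw nw1 by simp
        have d2: "1 - norm z \<le> norm (1 - of_real t * z)" using den_bound(2)[of t z] t nz by simp
        have zz: "0 < 1 - norm z" using nz by simp
        have "norm (Q w t) = norm (g t) * t^2 / (norm (1 - of_real t * w) * norm (1 - of_real t * z) ^ 2)"
          using t by (simp add: Q_def norm_mult norm_divide norm_power)
        also have "\<dots> \<le> norm (g t) * 1 / (r * (1 - norm z)^2)"
          using t d1 d2 zz r by (intro divide_mono mult_left_mono power_le_one mult_mono power_mono mult_pos_pos) auto
        finally show ?thesis by simp
      qed
      have Qm: "Q w \<in> borel_measurable \<mu>" unfolding Q_def by measurable
      have QI: "integrable \<mu> (Q w)"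
        by (rule Bochner_Integration.integrable_bound[where f = "\<lambda>t. norm (g t) / (r * (1 - norm z)^2)"])
          (use gi Qm Qb r nz in \<open>auto intro!: AE_I2 simp: abs_of_pos\<close>)
      have Ia: "integrable \<mu> (\<lambda>t. g t / (1 - of_real t * w))" using I1 nw1 by simp
      have Ib: "integrable \<mu> (\<lambda>t. g t / (1 - of_real t * z))" using I1 nz by simp
      have Ic: "integrable \<mu> (\<lambda>t. g t * of_real t ^ 1 / (1 - of_real t * z) ^ 2)"
        using ibound[OF gm gi nz, of 1 2] .
      have "F w - F z - (w - z) * D =
          (\<integral>t. g t / (1 - of_real t * w) - g t / (1 - of_real t * z) - (w - z) * (g t * of_real t ^ 1 / (1 - of_real t * z) ^ 2) \<partial>\<mu>)"
      proof -
        have e1: "(\<integral>t. g t / (1 - of_real t * w) - g t / (1 - of_real t * z) - (w - z) * (g t * of_real t ^ 1 / (1 - of_real t * z) ^ 2) \<partial>\<mu>)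
           = (\<integral>t. g t / (1 - of_real t * w) - g t / (1 - of_real t * z) \<partial>\<mu>) - (\<integral>t. (w - z) * (g t * of_real t ^ 1 / (1 - of_real t * z) ^ 2) \<partial>\<mu>)"
          by (rule Bochner_Integration.integral_diff[OF Bochner_Integration.integrable_diff[OF Ia Ib]]) (rule integrable_mult_right[OF Ic])
        have e2: "(\<integral>t. g t / (1 - of_real t * w) - g t / (1 - of_real t * z) \<partial>\<mu>) = F w - F z"
          unfolding F_def by (rule Bochner_Integration.integral_diff[OF Ia Ib])
        have e3: "(\<integral>t. (w - z) * (g t * of_real t ^ 1 / (1 - of_real t * z) ^ 2) \<partial>\<mu>) = (w - z) * D"
          unfolding D_def by (rule integral_mult_right_zero)
        show ?thesis unfolding e1 e2 e3 ..
      qed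
      also have "\<dots> = (\<integral>t. (w - z)^2 * Q w t \<partial>\<mu>)"
      proof (rule Bochner_Integration.integral_cong[OF refl])
        fix t assume "t \<in> space \<mu>"
        then have t: "0 \<le> t" "t < 1" using sp by auto
        have a: "1 - of_real t * w \<noteq> 0" using den_bound(2)[of t w] t nw1 by auto
        have b: "1 - of_real t * z \<noteq> 0" using den_bound(2)[of t z] t nz by auto
        show "g t / (1 - of_real t * w) - g t / (1 - of_real t * z) - (w - z) * (g t * of_real t ^ 1 / (1 - of_real t * z) ^ 2) =
              (w - z)^2 * Q w t"
          unfolding Q_def by (rule fid[OF a b])
      qed
      also have "\<dots> = (w - z)^2 * integral\<^sup>L \<mu> (Q w)" by simp
      finally have eq: "F w - F z - (w - z) * D = (w - z)^2 * integral\<^sup>L \<mu> (Q w)" .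
      have wz: "w - z \<noteq> 0" using w by simp
      have "(F w - F z) / (w - z) - D = (w - z) * integral\<^sup>L \<mu> (Q w)"
        using eq wz by (simp add: field_simps power2_eq_square)
      then have "norm ((F w - F z) / (w - z) - D) = norm (w - z) * norm (integral\<^sup>L \<mu> (Q w))"
        by (simp add: norm_mult)
      also have "\<dots> \<le> norm (w - z) * M"
      proof (rule mult_left_mono)
        have "norm (integral\<^sup>L \<mu> (Q w)) \<le> (\<integral>t. norm (g t) / (r * (1 - norm z)^2) \<partial>\<mu>)"
          by (rule Bochner_Integration.integral_norm_bound_integral[OF QI]) (use gi Qb in auto)
        also have "\<dots> = M" by (simp add: M_def Mg_def)
        finally show "norm (integral\<^sup>L \<mu> (Q w)) \<le> M" .
      qed simp
      finally show ?thesis by (simp add: mult.commute)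
    qed
    have lim0: "((\<lambda>w. M * norm (w - z)) \<longlongrightarrow> 0) (at z)"
    proof -
      have "((\<lambda>w. M * norm (w - z)) \<longlongrightarrow> M * norm (z - z)) (at z)" by (intro tendsto_intros)
      then show ?thesis by simp
    qed
    have "((\<lambda>w. (F w - F z) / (w - z) - D) \<longlongrightarrow> 0) (at z)"
    proof (rule Lim_null_comparison[OF _ lim0])
      show "\<forall>\<^sub>F w in at z. norm ((F w - F z) / (w - z) - D) \<le> M * norm (w - z)"
        unfolding eventually_at using r key by (intro exI[of _ r]) auto
    qed
    then have "((\<lambda>w. (F w - F z) / (w - z)) \<longlongrightarrow> D) (at z)" by (rule LIM_zero_cancel)
    then show ?thesis unfolding D_def[symmetric] has_field_derivative_iff .
  qed
  then show "(\<lambda>z. \<integral>t. g t / (1 - of_real t * z) \<partial>\<mu>) holomorphic_on ball 0 1"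
    unfolding F_def[symmetric] holomorphic_on_open[OF open_ball] by blast
qed

end


lemma weight_inv:
  fixes t a b g :: real
  assumes "t < 1" "(1-t) powr g * a \<le> b"
  shows "a \<le> b * (1-t) powr (-g)"
proof -
  have "(1-t) powr (-g) * ((1-t) powr g * a) \<le> (1-t) powr (-g) * b"
    using assms by (intro mult_left_mono) auto
  then show ?thesis using assms by (simp add: powr_minus field_simps)
qed

context msetup begin
interpretation finite_measure \<mu> by (rule fin)

lemma nec:
  assumes g: "0 < \<gamma>"
    and Hyp: "\<And>x. 0 \<le> x \<Longrightarrow> x < 1 \<Longrightarrow>
        integrable \<mu> (\<lambda>t. ft \<gamma> x (of_real t) / (1 - of_real t * of_real x)) \<and>
        Hinf (\<gamma>+\<delta>) (Imu \<mu> (ft \<gamma> x)) \<and> wnorm (\<gamma>+\<delta>) (Imu \<mu> (ft \<gamma> x)) \<le> C"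
  shows "carleson (1-\<delta>) \<mu>"
proof (rule carl_of_global[where K = "2 powr (\<gamma>+1) * C"], intro ballI)
  fix x :: real assume x: "x \<in> {0..<1}"
  then have x0: "0 \<le> x" and x1: "x < 1" by auto
  define u where "u = 1 - x"
  have u: "0 < u" using x1 by (simp add: u_def)
  define \<phi> where "\<phi> t = (1 - x * t) powr (-\<gamma>) / (1 - t * x)" for t
  obtain I: "integrable \<mu> (\<lambda>t. ft \<gamma> x (of_real t) / (1 - of_real t * of_real x))"
     and H: "Hinf (\<gamma>+\<delta>) (Imu \<mu> (ft \<gamma> x))" and Wn: "wnorm (\<gamma>+\<delta>) (Imu \<mu> (ft \<gamma> x)) \<le> C"
    using Hyp[OF x0 x1] by blast
  have eqi: "ft \<gamma> x (of_real t) / (1 - of_real t * of_real x) = of_real (\<phi> t)" if "t \<in> space \<mu>" for t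
  proof -
    have t: "0 \<le> t" "t < 1" using that sp by auto
    show ?thesis using ft_real[of x t \<gamma>] x0 x1 t by (simp add: \<phi>_def)
  qed
  have Fx: "Imu \<mu> (ft \<gamma> x) (of_real x) = of_real (integral\<^sup>L \<mu> \<phi>)"
    unfolding Imu_def
    by (subst Bochner_Integration.integral_cong[OF refl eqi]) auto
  have \<phi>pos: "0 \<le> \<phi> t" if "t \<in> space \<mu>" for t
  proof -
    have t: "0 \<le> t" "t < 1" using that sp by auto
    have "x * t \<le> x" using x0 t by (simp add: mult_left_le)
    then have "x * t < 1" using x1 by simp
    then show ?thesis by (simp add: \<phi>_def mult.commute)
  qed
  have \<phi>int: "integrable \<mu> \<phi>"
  proof (rule integrable_const_bound[where B = "(1-x) powr (-\<gamma>) / (1 - x)"])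
    show "\<phi> \<in> borel_measurable \<mu>" unfolding \<phi>_def by (intro meas_borel) measurable
    show "AE t in \<mu>. norm (\<phi> t) \<le> (1-x) powr (-\<gamma>) / (1 - x)"
    proof (rule AE_I2)
      fix t assume ts: "t \<in> space \<mu>"
      then have t: "0 \<le> t" "t < 1" using sp by auto
      have xt: "x * t \<le> x" using x0 t by (simp add: mult_left_le)
      have xt1: "x * t < 1" using xt x1 by simp
      have "(1 - x * t) powr (-\<gamma>) \<le> (1-x) powr (-\<gamma>)" using xt x1 g by (intro powr_mono2') auto
      then have "\<phi> t \<le> (1-x) powr (-\<gamma>) / (1 - x)"
        unfolding \<phi>_def using xt xt1 x1 by (intro frac_le) (auto simp: mult.commute)
      then show "norm (\<phi> t) \<le> (1-x) powr (-\<gamma>) / (1 - x)" using \<phi>pos[OF ts] by simp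
    qed
  qed
  have A: "{x..<1} \<in> sets \<mu>" by (rule tail_sets[OF x0])
  define c where "c = (2*u) powr (-\<gamma>) / (2*u)"
  have low: "measure \<mu> {x..<1} * c \<le> integral\<^sup>L \<mu> \<phi>"
  proof -
    have "measure \<mu> {x..<1} * c = (\<integral>t. indicator {x..<1} t * c \<partial>\<mu>)"
      using A sp x0 by (simp add: integral_indicator Int_absorb2)
    also have "\<dots> \<le> integral\<^sup>L \<mu> \<phi>"
    proof (rule integral_mono[OF _ \<phi>int])
      show "integrable \<mu> (\<lambda>t. indicator {x..<1} t * c)" using A
        by (intro integrable_mult_right_iff[THEN iffD2] disjI2 integrable_real_indicator) (auto simp: less_top[symmetric])
      fix t assume ts: "t \<in> space \<mu>"
      then have t: "0 \<le> t" "t < 1" using sp by auto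
      show "indicator {x..<1} t * c \<le> \<phi> t"
      proof (cases "x \<le> t")
        case True
        have le: "1 - x * t \<le> 2 * u"
        proof -
          have "x * x \<le> x * t" using True x0 by (simp add: mult_left_mono)
          moreover have "1 - x * x \<le> 2 * (1 - x)"
          proof -
            have "(1-x)*(1+x) \<le> (1-x)*2" using x0 x1 by (intro mult_left_mono) auto
            then show ?thesis by (simp add: algebra_simps)
          qed
          ultimately show ?thesis unfolding u_def by linarith
        qed
        have "x * t \<le> x" using x0 t by (simp add: mult_left_le)
        then have pos: "0 < 1 - x * t" using x1 by simp
        have "(2*u) powr (-\<gamma>) \<le> (1 - x * t) powr (-\<gamma>)" using le pos g by (intro powr_mono2') auto
        then have "c \<le> \<phi> t" unfolding c_def \<phi>_def using le pos
          by (intro frac_le) (auto simp: mult.commute)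
        then show ?thesis using True t by (simp add: indicator_def)
      qed (use \<phi>pos[OF ts] in \<open>auto simp: indicator_def\<close>)
    qed
    finally show ?thesis .
  qed
  have up: "integral\<^sup>L \<mu> \<phi> \<le> C * u powr (-(\<gamma>+\<delta>))"
  proof -
    have "vw (\<gamma>+\<delta>) (of_real x) * norm (Imu \<mu> (ft \<gamma> x) (of_real x)) \<le> wnorm (\<gamma>+\<delta>) (Imu \<mu> (ft \<gamma> x))"
      using Hinf_bound[OF H, of "of_real x"] x0 x1 by simp
    also have "\<dots> \<le> C" by (rule Wn)
    finally have "u powr (\<gamma>+\<delta>) * norm (Imu \<mu> (ft \<gamma> x) (of_real x)) \<le> C"
      using x0 by (simp add: vw_def u_def)
    then have "norm (Imu \<mu> (ft \<gamma> x) (of_real x)) \<le> C * u powr (-(\<gamma>+\<delta>))"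
      using weight_inv[of x "\<gamma>+\<delta>"] x1 unfolding u_def by simp
    moreover have "integral\<^sup>L \<mu> \<phi> \<le> norm (Imu \<mu> (ft \<gamma> x) (of_real x))" unfolding Fx by simp
    ultimately show ?thesis by linarith
  qed
  have u1: "(2*u) powr \<gamma> * (2*u) = 2 powr (\<gamma>+1) * u powr (\<gamma>+1)"
  proof -
    have "(2*u) powr \<gamma> * (2*u) = (2*u) powr \<gamma> * (2*u) powr 1" using u by simp
    also have "\<dots> = (2*u) powr (\<gamma>+1)" by (rule powr_add[symmetric])
    also have "\<dots> = 2 powr (\<gamma>+1) * u powr (\<gamma>+1)" using u by (simp add: powr_mult)
    finally show ?thesis .
  qed
  have ceq: "c = 1 / (2 powr (\<gamma>+1) * u powr (\<gamma>+1))"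
    unfolding c_def u1[symmetric] by (simp add: powr_minus_divide)
  have cpos: "0 < c" unfolding ceq using u by simp
  have "measure \<mu> {x..<1} * c \<le> C * u powr (-(\<gamma>+\<delta>))" using low up by linarith
  then have "measure \<mu> {x..<1} \<le> C * u powr (-(\<gamma>+\<delta>)) / c" using cpos by (simp add: pos_le_divide_eq)
  also have "\<dots> = C * (u powr (-(\<gamma>+\<delta>)) * u powr (\<gamma>+1)) * 2 powr (\<gamma>+1)"
    unfolding ceq by simp
  also have "u powr (-(\<gamma>+\<delta>)) * u powr (\<gamma>+1) = u powr (1-\<delta>)"
    by (simp add: powr_add[symmetric])
  finally show "measure \<mu> {x..<1} \<le> 2 powr (\<gamma>+1) * C * (1-x) powr (1-\<delta>)"
    unfolding u_def by (simp add: mult_ac)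
qed

end


context msetup begin
interpretation finite_measure \<mu> by (rule fin)

lemma suff:
  assumes K: "\<forall>t\<in>{0..<1}. measure \<mu> {t..<1} \<le> K * (1-t) powr (1-\<delta>)"
    and g: "0 < \<gamma>" "-\<gamma> < \<delta>" "\<delta> < 1 - \<gamma>"
  shows "Imu_bounded \<mu> Hinf \<gamma> (\<gamma>+\<delta>)" "Imu_bounded \<mu> H0 \<gamma> (\<gamma>+\<delta>)"
    "integrable \<mu> (\<lambda>t. 1 / (1-t) powr \<gamma>)"
proof -
  define P where "P = (\<lambda>h t::real. (1-t) powr (-\<gamma>) * (h + (1-t)) powr (-1))"
  obtain C1 where C1: "\<And>h. 0 < h \<Longrightarrow> h \<le> 1 \<Longrightarrow> integrable \<mu> (P h) \<and> integral\<^sup>L \<mu> (P h) \<le> C1 * h powr (-(\<gamma>+\<delta>))"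
  proof -
    from main_est[OF K, of \<gamma> 1] g obtain C where
      C: "\<forall>h. 0 < h \<and> h \<le> 1 \<longrightarrow> integrable \<mu> (\<lambda>t. (1-t) powr (-\<gamma>) * (h + (1-t)) powr (-1)) \<and>
         (\<integral>t. (1-t) powr (-\<gamma>) * (h + (1-t)) powr (-1) \<partial>\<mu>) \<le> C * h powr ((1-\<delta>) - \<gamma> - 1)" by auto
    have e: "(1-\<delta>) - \<gamma> - 1 = -(\<gamma>+\<delta>)" by simp
    show ?thesis
    proof (rule that[of C])
      fix h :: real assume h: "0 < h" "h \<le> 1"
      then have "integrable \<mu> (\<lambda>t. (1-t) powr (-\<gamma>) * (h + (1-t)) powr (-1)) \<and>
         (\<integral>t. (1-t) powr (-\<gamma>) * (h + (1-t)) powr (-1) \<partial>\<mu>) \<le> C * h powr ((1-\<delta>) - \<gamma> - 1)"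
        using C by blast
      then show "integrable \<mu> (P h) \<and> integral\<^sup>L \<mu> (P h) \<le> C * h powr (-(\<gamma>+\<delta>))"
        unfolding P_def e .
    qed
  qed
  have Pm[measurable]: "P h \<in> borel_measurable \<mu>" for h unfolding P_def by (intro meas_borel) measurable
  have Ppos: "0 \<le> P h t" for h t unfolding P_def by simp
  have Pform: "P h t = (1-t) powr (-\<gamma>) / (h + (1-t))" if "0 < h + (1-t)" for h t
    using that unfolding P_def by (simp add: powr_minus_divide)
  have intW: "integrable \<mu> (\<lambda>t. (1-t) powr (-\<gamma>))"
  proof (rule Bochner_Integration.integrable_bound[where f = "\<lambda>t. 2 * P 1 t"])
    show "integrable \<mu> (\<lambda>t. 2 * P 1 t)" using C1[of 1] by simp
    show "(\<lambda>t. (1-t) powr (-\<gamma>)) \<in> borel_measurable \<mu>" by (intro meas_borel) measurable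
    show "AE t in \<mu>. norm ((1-t) powr (-\<gamma>)) \<le> norm (2 * P 1 t)"
    proof (rule AE_I2)
      fix t assume "t \<in> space \<mu>"
      then have t: "0 \<le> t" "t < 1" using sp by auto
      have "(1-t) powr (-\<gamma>) \<le> 2 * ((1-t) powr (-\<gamma>) / (1 + (1-t)))"
        using t by (simp add: field_simps)
      then show "norm ((1-t) powr (-\<gamma>)) \<le> norm (2 * P 1 t)"
        using Pform[of 1 t] t Ppos[of 1 t] by simp
    qed
  qed
  show "integrable \<mu> (\<lambda>t. 1 / (1-t) powr \<gamma>)"
    using intW by (simp add: powr_minus_divide)
  define Mu where "Mu = measure \<mu> (space \<mu>)"
  have basic: "Imu_defined \<mu> f \<and>
      (\<forall>z\<in>ball 0 1. integrable \<mu> (\<lambda>t. f (of_real t) / (1 - of_real t * z))) \<and>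
      (\<lambda>t. f (of_real t)) \<in> borel_measurable \<mu>" if f: "Hinf \<gamma> f" for f
  proof -
    define W where "W = wnorm \<gamma> f"
    have fc: "continuous_on (ball 0 1) f" using f unfolding Hinf_def by (intro holomorphic_on_imp_continuous_on) auto
    have gm[measurable]: "(\<lambda>t. f (of_real t)) \<in> borel_measurable \<mu>"
    proof (rule meas_cont)
      show "continuous_on {0..<1} (\<lambda>t. f (of_real t))"
        by (rule continuous_on_compose2[OF fc, of _ of_real]) (auto intro: continuous_intros)
    qed
    have gi: "integrable \<mu> (\<lambda>t. norm (f (of_real t)))"
    proof (rule Bochner_Integration.integrable_bound[where f = "\<lambda>t. W * (1-t) powr (-\<gamma>)"])
      show "integrable \<mu> (\<lambda>t. W * (1-t) powr (-\<gamma>))" using intW by simp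
      show "(\<lambda>t. norm (f (of_real t))) \<in> borel_measurable \<mu>" by measurable
      show "AE t in \<mu>. norm (norm (f (of_real t))) \<le> norm (W * (1-t) powr (-\<gamma>))"
      proof (rule AE_I2)
        fix t assume "t \<in> space \<mu>"
        then have t: "0 \<le> t" "t < 1" using sp by auto
        have "norm (f (of_real t)) \<le> W * (1-t) powr (-\<gamma>)" unfolding W_def by (rule Hinf_real_bound[OF f t])
        then show "norm (norm (f (of_real t))) \<le> norm (W * (1-t) powr (-\<gamma>))" by simp
      qed
    qed
    have eqI: "Imu \<mu> f = (\<lambda>z. \<integral>t. f (of_real t) / (1 - of_real t * z) \<partial>\<mu>)"
      by (rule ext) (simp add: Imu_def)
    show ?thesis using holo_int[OF gm gi] unfolding Imu_defined_def eqI by auto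
  qed
  have pt: "norm (f (of_real t) / (1 - of_real t * z)) \<le> 2 * A * P (1 - norm z) t"
    if z: "norm z < 1" and t: "0 \<le> t" "t < 1" and fb: "norm (f (of_real t)) \<le> A * (1-t) powr (-\<gamma>)" for f :: "complex \<Rightarrow> complex" and z :: complex and t A :: real
  proof -
    have d: "((1 - norm z) + (1 - t)) / 2 \<le> norm (1 - of_real t * z)" using den_bound(4)[of t z] t z by simp
    have hp: "0 < (1 - norm z) + (1 - t)" using z t by simp
    have A0: "0 \<le> A * (1-t) powr (-\<gamma>)" using fb norm_ge_zero order_trans by blast
    have "norm (f (of_real t) / (1 - of_real t * z)) = norm (f (of_real t)) / norm (1 - of_real t * z)"
      by (simp add: norm_divide)
    also have "\<dots> \<le> (A * (1-t) powr (-\<gamma>)) / (((1 - norm z) + (1 - t)) / 2)"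
      using d hp fb A0 by (intro frac_le) auto
    also have "\<dots> = 2 * A * P (1 - norm z) t" using Pform[OF hp] by simp
    finally show ?thesis .
  qed
  have bound: "norm (Imu \<mu> f z) \<le> 2 * wnorm \<gamma> f * C1 * (1 - norm z) powr (-(\<gamma>+\<delta>))"
    if f: "Hinf \<gamma> f" and z: "z \<in> ball 0 1" for f z
  proof -
    define W where "W = wnorm \<gamma> f"
    define h where "h = 1 - norm z"
    have h: "0 < h" "h \<le> 1" using z by (auto simp: h_def)
    have I: "integrable \<mu> (\<lambda>t. f (of_real t) / (1 - of_real t * z))" using basic[OF f] z by blast
    have "norm (Imu \<mu> f z) \<le> (\<integral>t. 2 * W * P h t \<partial>\<mu>)"
      unfolding Imu_def
    proof (rule Bochner_Integration.integral_norm_bound_integral[OF I])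
      show "integrable \<mu> (\<lambda>t. 2 * W * P h t)" using C1[OF h] by simp
      fix t assume "t \<in> space \<mu>"
      then have t: "0 \<le> t" "t < 1" using sp by auto
      show "norm (f (of_real t) / (1 - of_real t * z)) \<le> 2 * W * P h t"
        unfolding h_def W_def using z t by (intro pt Hinf_real_bound[OF f]) auto
    qed
    also have "\<dots> = 2 * W * integral\<^sup>L \<mu> (P h)" by simp
    also have "\<dots> \<le> 2 * W * (C1 * h powr (-(\<gamma>+\<delta>)))"
      using C1[OF h] wnorm_nonneg[OF f] unfolding W_def by (intro mult_left_mono) auto
    finally show ?thesis unfolding W_def h_def by (simp add: mult_ac)
  qed
  have wbound: "vw (\<gamma>+\<delta>) z * norm (Imu \<mu> f z) \<le> 2 * C1 * wnorm \<gamma> f"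
    if f: "Hinf \<gamma> f" and z: "z \<in> ball 0 1" for f z
  proof -
    have nz: "norm z < 1" using z by simp
    have "vw (\<gamma>+\<delta>) z * norm (Imu \<mu> f z) \<le> (1 - norm z) powr (\<gamma>+\<delta>) * (2 * wnorm \<gamma> f * C1 * (1 - norm z) powr (-(\<gamma>+\<delta>)))"
      unfolding vw_def by (intro mult_left_mono bound[OF f z]) auto
    also have "\<dots> = 2 * C1 * wnorm \<gamma> f * ((1 - norm z) powr (\<gamma>+\<delta>) * (1 - norm z) powr (-(\<gamma>+\<delta>)))"
      by (simp add: mult_ac)
    also have "(1 - norm z) powr (\<gamma>+\<delta>) * (1 - norm z) powr (-(\<gamma>+\<delta>)) = 1"
      using nz by (simp add: powr_add[symmetric])
    finally show ?thesis by simp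
  qed
  have HinfI: "Hinf (\<gamma>+\<delta>) (Imu \<mu> f) \<and> wnorm (\<gamma>+\<delta>) (Imu \<mu> f) \<le> 2 * C1 * wnorm \<gamma> f"
    if f: "Hinf \<gamma> f" for f
  proof -
    have "Imu \<mu> f holomorphic_on ball 0 1" using basic[OF f] unfolding Imu_defined_def by blast
    then show ?thesis using wbound[OF f] Hinf_intro[of "Imu \<mu> f" "\<gamma>+\<delta>" "2 * C1 * wnorm \<gamma> f"]
        wnorm_le[of "\<gamma>+\<delta>" "Imu \<mu> f" "2 * C1 * wnorm \<gamma> f"] by blast
  qed
  show "Imu_bounded \<mu> Hinf \<gamma> (\<gamma>+\<delta>)"
    unfolding Imu_bounded_def using basic HinfI by blast
  have Mu0: "0 \<le> Mu" by (simp add: Mu_def)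
  have H0part: "Imu_defined \<mu> f \<and> H0 (\<gamma>+\<delta>) (Imu \<mu> f)" if f0: "H0 \<gamma> f" for f
  proof -
    have f: "Hinf \<gamma> f" using f0 unfolding H0_def by blast
    show "Imu_defined \<mu> f \<and> H0 (\<gamma>+\<delta>) (Imu \<mu> f)"
    proof (intro conjI)
      show "Imu_defined \<mu> f" using basic[OF f] by blast
      have vanish: "\<exists>r<1. \<forall>z\<in>ball 0 1. r < norm z \<longrightarrow> vw (\<gamma>+\<delta>) z * norm (Imu \<mu> f z) < e"
        if e: "e > 0" for e
      proof -
        define W where "W = wnorm \<gamma> f"
        have W0: "0 \<le> W" using wnorm_nonneg[OF f] by (simp add: W_def)
        define \<epsilon> where "\<epsilon> = e / (4 * (\<bar>C1\<bar> + 1))"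
        have \<epsilon>: "0 < \<epsilon>" using e by (simp add: \<epsilon>_def add_pos_nonneg)
        have \<epsilon>C: "2 * \<epsilon> * C1 \<le> e/2"
        proof -
          have "2 * \<epsilon> * C1 \<le> 2 * \<epsilon> * (\<bar>C1\<bar> + 1)" using \<epsilon> by (intro mult_left_mono) auto
          also have "\<dots> = e/2" unfolding \<epsilon>_def by (simp add: field_simps add_pos_nonneg)
          finally show ?thesis .
        qed
        obtain r0 where r0: "r0 < 1" "\<forall>z\<in>ball 0 1. r0 < norm z \<longrightarrow> vw \<gamma> z * norm (f z) < \<epsilon>"
          using f0 \<epsilon> unfolding H0_def by blast
        define r1 where "r1 = max r0 0"
        have r1: "0 \<le> r1" "r1 < 1" "r0 \<le> r1" using r0 by (auto simp: r1_def)
        define B where "B = W * (1-r1) powr (-\<gamma>) / (1 - r1)"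
        have B0: "0 \<le> B" using W0 r1 by (simp add: B_def)
        define c where "c = e / (2 * (B * Mu + 1))"
        have BM: "0 \<le> B * Mu" using B0 Mu0 by simp
        have c: "0 < c" using e BM by (simp add: c_def add_pos_nonneg)
        have c2: "(B * Mu + 1) * c = e/2" using BM by (simp add: c_def field_simps)
        obtain r2 where r2: "r2 < 1" "\<forall>z\<in>ball (0::complex) 1. r2 < norm z \<longrightarrow> (1 - norm z) powr (\<gamma>+\<delta>) < c"
          using small_weight[of "\<gamma>+\<delta>" c] g c by auto
        show ?thesis
        proof (intro exI[of _ r2] conjI ballI impI r2(1))
          fix z :: complex assume z: "z \<in> ball 0 1" "r2 < norm z"
          have nz: "norm z < 1" using z by simp
          define h where "h = 1 - norm z"
          have h: "0 < h" "h \<le> 1" using nz by (auto simp: h_def)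
          have I: "integrable \<mu> (\<lambda>t. f (of_real t) / (1 - of_real t * z))" using basic[OF f] z by blast
          have pb: "norm (f (of_real t) / (1 - of_real t * z)) \<le> 2 * \<epsilon> * P h t + B" if ts: "t \<in> space \<mu>" for t
          proof -
            have t: "0 \<le> t" "t < 1" using ts sp by auto
            show ?thesis
            proof (cases "r1 < t")
              case True
              have tb: "of_real t \<in> ball (0::complex) 1" using t by simp
              have "vw \<gamma> (of_real t) * norm (f (of_real t)) < \<epsilon>"
                using r0(2) tb True r1 t by auto
              then have "(1-t) powr \<gamma> * norm (f (of_real t)) \<le> \<epsilon>" using t by (simp add: vw_def)
              then have "norm (f (of_real t)) \<le> \<epsilon> * (1-t) powr (-\<gamma>)" using t by (intro weight_inv) auto
              then have "norm (f (of_real t) / (1 - of_real t * z)) \<le> 2 * \<epsilon> * P (1 - norm z) t"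
                by (intro pt nz t)
              then show ?thesis using B0 unfolding h_def by simp
            next
              case False
              have "norm (f (of_real t)) \<le> W * (1-t) powr (-\<gamma>)" unfolding W_def by (rule Hinf_real_bound[OF f t])
              also have "\<dots> \<le> W * (1-r1) powr (-\<gamma>)"
                using False r1 t g W0 by (intro mult_left_mono powr_mono2') auto
              finally have fb: "norm (f (of_real t)) \<le> W * (1-r1) powr (-\<gamma>)" .
              have d: "1 - t \<le> norm (1 - of_real t * z)" using den_bound(3)[of t z] t nz by simp
              have "norm (f (of_real t) / (1 - of_real t * z)) = norm (f (of_real t)) / norm (1 - of_real t * z)"
                by (simp add: norm_divide)
              also have "\<dots> \<le> B" unfolding B_def using fb d False r1 W0 by (intro frac_le) auto
              also have "\<dots> \<le> 2 * \<epsilon> * P h t + B" using \<epsilon> Ppos[of h t] by simp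
              finally show ?thesis .
            qed
          qed
          have PI: "integrable \<mu> (P h)" using C1[OF h] by blast
          have "norm (Imu \<mu> f z) \<le> (\<integral>t. 2 * \<epsilon> * P h t + B \<partial>\<mu>)"
            unfolding Imu_def
          proof (rule Bochner_Integration.integral_norm_bound_integral[OF I])
            show "integrable \<mu> (\<lambda>t. 2 * \<epsilon> * P h t + B)" using PI by simp
          qed (rule pb)
          also have "\<dots> = 2 * \<epsilon> * integral\<^sup>L \<mu> (P h) + B * Mu"
            using PI by (simp add: Mu_def)
          also have "\<dots> \<le> 2 * \<epsilon> * (C1 * h powr (-(\<gamma>+\<delta>))) + B * Mu"
            using C1[OF h] \<epsilon> by (intro add_right_mono mult_left_mono) auto
          finally have nb: "norm (Imu \<mu> f z) \<le> 2 * \<epsilon> * (C1 * h powr (-(\<gamma>+\<delta>))) + B * Mu" .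
          have hp: "h powr (\<gamma>+\<delta>) < c" using r2(2) z unfolding h_def by blast
          have "vw (\<gamma>+\<delta>) z * norm (Imu \<mu> f z) \<le> h powr (\<gamma>+\<delta>) * (2 * \<epsilon> * (C1 * h powr (-(\<gamma>+\<delta>))) + B * Mu)"
            unfolding vw_def h_def[symmetric] by (intro mult_left_mono nb) auto
          also have "\<dots> = 2 * \<epsilon> * C1 * (h powr (\<gamma>+\<delta>) * h powr (-(\<gamma>+\<delta>))) + B * Mu * h powr (\<gamma>+\<delta>)"
            by (simp add: algebra_simps)
          also have "h powr (\<gamma>+\<delta>) * h powr (-(\<gamma>+\<delta>)) = 1" using h by (simp add: powr_add[symmetric])
          also have "B * Mu * h powr (\<gamma>+\<delta>) \<le> B * Mu * c" using hp BM by (intro mult_left_mono) auto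
          also have "B * Mu * c < e/2" using c2 c by (simp add: algebra_simps)
          finally show "vw (\<gamma>+\<delta>) z * norm (Imu \<mu> f z) < e" using \<epsilon>C by simp
        qed
      qed
      show "H0 (\<gamma>+\<delta>) (Imu \<mu> f)" unfolding H0_def using HinfI[OF f] vanish by blast
    qed
  qed
  show "Imu_bounded \<mu> H0 \<gamma> (\<gamma>+\<delta>)"
    unfolding Imu_bounded_def using H0part HinfI unfolding H0_def by blast
qed

end


lemma max_mult_le: "0 \<le> (w::real) \<Longrightarrow> w \<le> 1 \<Longrightarrow> C0 * w \<le> max C0 0"
proof -
  assume w: "0 \<le> w" "w \<le> 1"
  have "C0 * w \<le> max C0 0 * w" using w by (intro mult_right_mono) auto
  also have "\<dots> \<le> max C0 0" using w by (simp add: mult_left_le)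
  finally show ?thesis .
qed

theorem theorem16:
  fixes \<mu> :: "real measure" and \<gamma> \<delta> :: real
  assumes "finite_measure \<mu>"
    and "space \<mu> = {0..<1}"
    and "sets \<mu> = sets (restrict_space borel {0..<1})"
    and "\<gamma> > 0" and "- \<gamma> < \<delta>" and "\<delta> < 1 - \<gamma>"
  shows "(Imu_bounded \<mu> Hinf \<gamma> (\<gamma> + \<delta>)
           \<longleftrightarrow> Imu_bounded \<mu> H0 \<gamma> (\<gamma> + \<delta>) \<and> integrable \<mu> (\<lambda>t. 1 / (1 - t) powr \<gamma>))
       \<and> (Imu_bounded \<mu> H0 \<gamma> (\<gamma> + \<delta>) \<and> integrable \<mu> (\<lambda>t. 1 / (1 - t) powr \<gamma>)
           \<longleftrightarrow> carleson (1 - \<delta>) \<mu>)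
       \<and> (carleson (1 - \<delta>) \<mu>
           \<longleftrightarrow> (\<lambda>n. moment \<mu> n) \<in> O(\<lambda>n. 1 / real n powr (1 - \<delta>)))"
proof -
  interpret M: msetup \<mu> using assms(1,2,3) by (rule msetup.intro)
  have s: "0 < 1 - \<delta>" using assms by simp
  have g: "0 < \<gamma>" "-\<gamma> < \<delta>" "\<delta> < 1 - \<gamma>" using assms by auto
  have necA: "carleson (1-\<delta>) \<mu>" if IB: "Imu_bounded \<mu> Hinf \<gamma> (\<gamma>+\<delta>)"
  proof -
    obtain C0 where C0: "\<forall>f. Hinf \<gamma> f \<longrightarrow> wnorm (\<gamma>+\<delta>) (Imu \<mu> f) \<le> C0 * wnorm \<gamma> f"
      and D: "\<forall>f. Hinf \<gamma> f \<longrightarrow> Imu_defined \<mu> f \<and> Hinf (\<gamma>+\<delta>) (Imu \<mu> f)"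
      using IB unfolding Imu_bounded_def by blast
    show ?thesis
    proof (rule M.nec[OF g(1), of \<delta> "max C0 0"])
      fix x :: real assume x: "0 \<le> x" "x < 1"
      have fH: "Hinf \<gamma> (ft \<gamma> x)" "wnorm \<gamma> (ft \<gamma> x) \<le> 1" using ft_H0[OF x g(1)] by auto
      have w0: "0 \<le> wnorm \<gamma> (ft \<gamma> x)" by (rule wnorm_nonneg[OF fH(1)])
      have xb: "of_real x \<in> ball (0::complex) 1" using x by simp
      have D1: "Imu_defined \<mu> (ft \<gamma> x)" "Hinf (\<gamma>+\<delta>) (Imu \<mu> (ft \<gamma> x))" using D fH(1) by auto
      have I: "integrable \<mu> (\<lambda>t. ft \<gamma> x (of_real t) / (1 - of_real t * of_real x))"
        using D1(1) xb unfolding Imu_defined_def by blast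
      have W: "wnorm (\<gamma>+\<delta>) (Imu \<mu> (ft \<gamma> x)) \<le> max C0 0"
        by (rule order_trans[OF C0[rule_format, OF fH(1)] max_mult_le[OF w0 fH(2)]])
      show "integrable \<mu> (\<lambda>t. ft \<gamma> x (of_real t) / (1 - of_real t * of_real x)) \<and>
          Hinf (\<gamma>+\<delta>) (Imu \<mu> (ft \<gamma> x)) \<and> wnorm (\<gamma>+\<delta>) (Imu \<mu> (ft \<gamma> x)) \<le> max C0 0"
        using I D1(2) W by blast
    qed
  qed
  have necB: "carleson (1-\<delta>) \<mu>" if IB: "Imu_bounded \<mu> H0 \<gamma> (\<gamma>+\<delta>)"
  proof -
    obtain C0 where C0: "\<forall>f. H0 \<gamma> f \<longrightarrow> wnorm (\<gamma>+\<delta>) (Imu \<mu> f) \<le> C0 * wnorm \<gamma> f"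
      and D: "\<forall>f. H0 \<gamma> f \<longrightarrow> Imu_defined \<mu> f \<and> H0 (\<gamma>+\<delta>) (Imu \<mu> f)"
      using IB unfolding Imu_bounded_def by blast
    show ?thesis
    proof (rule M.nec[OF g(1), of \<delta> "max C0 0"])
      fix x :: real assume x: "0 \<le> x" "x < 1"
      have fH: "H0 \<gamma> (ft \<gamma> x)" "Hinf \<gamma> (ft \<gamma> x)" "wnorm \<gamma> (ft \<gamma> x) \<le> 1" using ft_H0[OF x g(1)] by auto
      have w0: "0 \<le> wnorm \<gamma> (ft \<gamma> x)" by (rule wnorm_nonneg[OF fH(2)])
      have xb: "of_real x \<in> ball (0::complex) 1" using x by simp
      have D1: "Imu_defined \<mu> (ft \<gamma> x)" "H0 (\<gamma>+\<delta>) (Imu \<mu> (ft \<gamma> x))" using D fH(1) by auto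
      have D2: "Hinf (\<gamma>+\<delta>) (Imu \<mu> (ft \<gamma> x))" using D1(2) unfolding H0_def by blast
      have I: "integrable \<mu> (\<lambda>t. ft \<gamma> x (of_real t) / (1 - of_real t * of_real x))"
        using D1(1) xb unfolding Imu_defined_def by blast
      have W: "wnorm (\<gamma>+\<delta>) (Imu \<mu> (ft \<gamma> x)) \<le> max C0 0"
        by (rule order_trans[OF C0[rule_format, OF fH(1)] max_mult_le[OF w0 fH(3)]])
      show "integrable \<mu> (\<lambda>t. ft \<gamma> x (of_real t) / (1 - of_real t * of_real x)) \<and>
          Hinf (\<gamma>+\<delta>) (Imu \<mu> (ft \<gamma> x)) \<and> wnorm (\<gamma>+\<delta>) (Imu \<mu> (ft \<gamma> x)) \<le> max C0 0"
        using I D2 W by blast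
    qed
  qed
  have suf: "Imu_bounded \<mu> Hinf \<gamma> (\<gamma>+\<delta>) \<and> Imu_bounded \<mu> H0 \<gamma> (\<gamma>+\<delta>) \<and> integrable \<mu> (\<lambda>t. 1 / (1-t) powr \<gamma>)"
    if c: "carleson (1-\<delta>) \<mu>"
  proof -
    obtain K where K: "\<forall>t\<in>{0..<1}. measure \<mu> {t..<1} \<le> K * (1-t) powr (1-\<delta>)"
      using M.carl_global[OF c s] by blast
    show ?thesis using M.suff[OF K g] by blast
  qed
  have mom: "carleson (1 - \<delta>) \<mu> \<longleftrightarrow> (\<lambda>n. moment \<mu> n) \<in> O(\<lambda>n. 1 / real n powr (1 - \<delta>))"
  proof
    assume c: "carleson (1-\<delta>) \<mu>"
    obtain K where K: "\<forall>t\<in>{0..<1}. measure \<mu> {t..<1} \<le> K * (1-t) powr (1-\<delta>)"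
      using M.carl_global[OF c s] by blast
    show "(\<lambda>n. moment \<mu> n) \<in> O(\<lambda>n. 1 / real n powr (1 - \<delta>))" by (rule M.carl_moment[OF K s])
  next
    assume "(\<lambda>n. moment \<mu> n) \<in> O(\<lambda>n. 1 / real n powr (1 - \<delta>))"
    then show "carleson (1-\<delta>) \<mu>" by (rule M.moment_carl[OF _ s])
  qed
  show ?thesis using necA necB suf mom by blast
qed


end
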